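(* Let $\mathcal G=(G,f,h)$ be a network dynamical system of size $N$ with maximum out-degree $\Delta(G)$, satisfying Assumptions 1 and 2. For each $q\in[N]$ let $\phi_q\in\mathbb R^{P\times N}$ ($P<N$) satisfy $\delta_{2(\Delta(G)+1)}(\phi_q)<\sqrt2-1$. For each $q\in[N]$ let $x^q(1)$ be the time-1 state of the trajectory from a $q$-pinching initial condition and $y^q(1)=\phi_q x^q(1)$. Then for every $q\in[N]$ the convex problem $$\min_{\tilde x\in\mathbb R^N}\|\tilde x\|_1\quad\text{subject to}\quad \phi_q\tilde x=y^q(1)$$ has a unique solution $x^q_*(1)$, and $x^q_*(1)=x^q(1)$. Moreover $\operatorname{supp}(x^q(1))\setminus\{q\}=L_1(q)$ for every $q$, so the adjacency matrix is uniquely determined via $A_{ij}=1$ iff $i\neq j$ and $i\in\operatorname{supp}(x^j_*(1))$.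
   Context: Let $G$ be a directed graph on vertex set $[N]=\{1,\dots,N\}$ without self-loops, with adjacency matrix $A\in\{0,1\}^{N\times N}$, where $A_{ij}=1$ if and only if $i$ receives an edge (input) from $j$; in particular $A_{ii}=0$. The out-degree of $q\in[N]$ is $d_q=\#\{i: A_{iq}=1\}$, the maximum out-degree is $\Delta(G)=\max_{q}d_q$, and the first-level set of $q$ is $L_1(q)=\{i\in[N]: A_{iq}=1\}$. The network dynamical system $\mathcal G=(G,f,h)$ is the discrete-time system $x_i(t+1)=f_i(x_i(t))+\sum_{j=1}^N A_{ij}h_{ij}(x_i(t),x_j(t))$ for $i\in[N]$, $t=0,1,2,\dots$, where $f_i:\mathbb R\to\mathbb R$ and $h_{ij}:\mathbb R\times\mathbb R\to\mathbb R$; the state vector is $x(t)=(x_1(t),\dots,x_N(t))^T$. Assumption 1: $f_i(0)=0$ for all $i\in[N]$. Assumption 2: there is $\delta>0$ such that for all $i,j\in[N]$, $h_{ij}(0,0)=0$ and $h_{ij}(0,v)\neq 0$ for every $v$ with $0<|v|<\delta$. For $q\in[N]$, a $q$-pinching initial condition is $x^q(0)$ with $x^q_i(0)=\epsilon_q\delta_{iq}$ (Kronecker delta), where $0<|\epsilon_q|<\delta$; $x^q(t)$ denotes the resulting trajectory. For $x\in\mathbb R^N$, $\operatorname{supp}(x)=\{i: x_i\neq0\}$ and $\|x\|_0=\#\operatorname{supp}(x)$; $x$ is $s$-sparse if $\|x\|_0\le s$. The restricted isometry constant $\delta_s(\phi)$ of $\phi\in\mathbb R^{P\times N}$ is the smallest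 number such that $(1-\delta_s(\phi))\|x\|_2^2\le\|\phi x\|_2^2\le(1+\delta_s(\phi))\|x\|_2^2$ for all $s$-sparse $x\in\mathbb R^N$. *)

theory Defs
  imports "HOL-Analysis.Analysis"
begin

text \<open>Vertex set [N] is the finite type 'n (N = CARD('n)); the adjacency matrix is
  the relation A :: 'n => 'n => bool with A i j meaning A_ij = 1 (i receives from j).\<close>

definition out_degree :: "('n::finite \<Rightarrow> 'n \<Rightarrow> bool) \<Rightarrow> 'n \<Rightarrow> nat" where
  "out_degree A q = card {i. A i q}"

definition max_out_degree :: "('n::finite \<Rightarrow> 'n \<Rightarrow> bool) \<Rightarrow> nat" where
  "max_out_degree A = Max (range (out_degree A))"

definition first_level :: "('n::finite \<Rightarrow> 'n \<Rightarrow> bool) \<Rightarrow> 'n \<Rightarrow> 'n set" where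
  "first_level A q = {i. A i q}"

definition net_step ::
  "('n::finite \<Rightarrow> 'n \<Rightarrow> bool) \<Rightarrow> ('n \<Rightarrow> real \<Rightarrow> real) \<Rightarrow> ('n \<Rightarrow> 'n \<Rightarrow> real \<Rightarrow> real \<Rightarrow> real)
    \<Rightarrow> real^'n \<Rightarrow> real^'n" where
  "net_step A f h x = (\<chi> i. f i (x$i) + (\<Sum>j\<in>{j. A i j}. h i j (x$i) (x$j)))"

definition trajectory ::
  "('n::finite \<Rightarrow> 'n \<Rightarrow> bool) \<Rightarrow> ('n \<Rightarrow> real \<Rightarrow> real) \<Rightarrow> ('n \<Rightarrow> 'n \<Rightarrow> real \<Rightarrow> real \<Rightarrow> real)
    \<Rightarrow> real^'n \<Rightarrow> nat \<Rightarrow> real^'n" where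
  "trajectory A f h x0 t = (net_step A f h ^^ t) x0"

definition pinching :: "real \<Rightarrow> 'n::finite \<Rightarrow> real^'n" where
  "pinching eps q = (\<chi> i. if i = q then eps else 0)"

definition supp :: "real^'n::finite \<Rightarrow> 'n set" where
  "supp x = {i. x$i \<noteq> 0}"

definition l0 :: "real^'n::finite \<Rightarrow> nat" where
  "l0 x = card (supp x)"

definition sparse :: "nat \<Rightarrow> real^'n::finite \<Rightarrow> bool" where
  "sparse s x \<longleftrightarrow> l0 x \<le> s"

definition l1_norm :: "real^'n::finite \<Rightarrow> real" where
  "l1_norm x = (\<Sum>i\<in>UNIV. \<bar>x$i\<bar>)"

definition RIC :: "real^'n::finite^'p::finite \<Rightarrow> nat \<Rightarrow> real" where
  "RIC phi s = Inf {d. \<forall>x. sparse s x \<longrightarrow>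
      (1 - d) * (norm x)\<^sup>2 \<le> (norm (phi *v x))\<^sup>2 \<and> (norm (phi *v x))\<^sup>2 \<le> (1 + d) * (norm x)\<^sup>2}"

definition l1_min_solution :: "real^'n::finite^'p::finite \<Rightarrow> real^'p \<Rightarrow> real^'n \<Rightarrow> bool" where
  "l1_min_solution phi y z \<longleftrightarrow> phi *v z = y \<and> (\<forall>w. phi *v w = y \<longrightarrow> l1_norm z \<le> l1_norm w)"

end

theory Submission
  imports Defs
begin


definition restr :: "'n set \<Rightarrow> real^'n::finite \<Rightarrow> real^'n" where
  "restr T v = (\<chi> i. if i \<in> T then v$i else 0)"

lemma restr_nth[simp]: "restr T v $ i = (if i \<in> T then v$i else 0)"
  by (simp add: restr_def)

lemma supp_restr: "supp (restr T v) \<subseteq> T"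
  by (auto simp: supp_def)

lemma l0_restr: "l0 (restr T v) \<le> card T"
  unfolding l0_def by (rule card_mono[OF finite supp_restr])

lemma restr_add: "A \<inter> B = {} \<Longrightarrow> restr A v + restr B v = restr (A \<union> B) v"
  by (auto simp: vec_eq_iff)

lemma restr_UNIV: "restr UNIV v = v"
  by (auto simp: vec_eq_iff)

lemma norm_sq_vec: "(norm (x::real^'n::finite))\<^sup>2 = (\<Sum>i\<in>UNIV. (x$i)\<^sup>2)"
  unfolding norm_vec_def L2_set_def by (simp add: sum_nonneg)

lemma norm_restr_sq: "(norm (restr T v))\<^sup>2 = (\<Sum>i\<in>T. (v$i)\<^sup>2)"
proof -
  have "(norm (restr T v))\<^sup>2 = (\<Sum>i\<in>UNIV. (if i \<in> T then (v$i)\<^sup>2 else 0))"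
    unfolding norm_sq_vec by (intro sum.cong) auto
  also have "\<dots> = (\<Sum>i\<in>T. (v$i)\<^sup>2)"
    by (simp add: sum.If_cases)
  finally show ?thesis .
qed

lemma norm_restr_L2: "norm (restr T v) = L2_set (\<lambda>i. v$i) T"
proof -
  have "norm (restr T v) = sqrt ((norm (restr T v))\<^sup>2)" by simp
  then show ?thesis unfolding norm_restr_sq L2_set_def by simp
qed

lemma l1_le_sqrt_card: "(\<Sum>i\<in>T. \<bar>v$i\<bar>) \<le> sqrt (card T) * norm (restr T v)"
proof -
  have "(\<Sum>i\<in>T. \<bar>v$i\<bar> * \<bar>1::real\<bar>) \<le> L2_set (\<lambda>i. v$i) T * L2_set (\<lambda>i. 1) T"
    by (rule L2_set_mult_ineq)
  then show ?thesis by (simp add: norm_restr_L2 L2_set_constant mult.commute)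
qed

lemma norm_restr_le: assumes "\<And>i. i \<in> T \<Longrightarrow> \<bar>v$i\<bar> \<le> c"
  shows "norm (restr T v) \<le> sqrt (card T) * c"
proof -
  have e: "L2_set (\<lambda>i. v$i) T = L2_set (\<lambda>i. \<bar>v$i\<bar>) T"
    unfolding L2_set_def by simp
  have "L2_set (\<lambda>i. \<bar>v$i\<bar>) T \<le> L2_set (\<lambda>i. c) T"
    using assms by (intro L2_set_mono) auto
  then have "L2_set (\<lambda>i. v$i) T \<le> L2_set (\<lambda>i. c) T" using e by simp
  moreover have "c \<ge> 0 \<or> T = {}" using assms by (meson abs_ge_zero ex_in_conv order_trans)
  ultimately show ?thesis by (auto simp: norm_restr_L2 L2_set_constant)
qed

lemma inner_disjoint: "supp u \<inter> supp v = {} \<Longrightarrow> inner u (v::real^'n::finite) = 0"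
  unfolding inner_vec_def supp_def by (intro sum.neutral) auto

lemma supp_lin: "supp (a *\<^sub>R u + b *\<^sub>R v) \<subseteq> supp u \<union> supp (v::real^'n::finite)"
  by (auto simp: supp_def)

lemma select_top:
  fixes g :: "'a \<Rightarrow> real"
  assumes "finite R" "k \<le> card R"
  shows "\<exists>B\<subseteq>R. card B = k \<and> (\<forall>i\<in>B. \<forall>j\<in>R - B. g j \<le> g i)"
  using assms(2)
proof (induction k)
  case 0 then show ?case by auto
next
  case (Suc k)
  then obtain B where B: "B \<subseteq> R" "card B = k" "\<forall>i\<in>B. \<forall>j\<in>R - B. g j \<le> g i" by auto
  have fB: "finite B" using B(1) assms(1) finite_subset by blast
  have "card (R - B) > 0" using Suc.prems B fB by (simp add: card_Diff_subset)
  then have ne: "R - B \<noteq> {}" by (metis card.empty less_irrefl)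
  have fin: "finite (R - B)" using assms(1) by auto
  obtain m where m: "m \<in> R - B" "\<forall>j\<in>R - B. g j \<le> g m"
    using Max_in[OF finite_imageI[OF fin], of g] ne fin
    by (metis (no_types, lifting) Max_ge finite_imageI image_iff image_is_empty)
  show ?case
    apply (rule exI[of _ "insert m B"])
    using B m fB by auto
qed



context
  fixes phi :: "real^'n::finite^'p::finite" and d :: real and s :: nat
  assumes d0: "0 \<le> d" and s0: "0 < s"
  and rip: "\<forall>x. l0 x \<le> 2 * s \<longrightarrow> (1-d)*(norm x)\<^sup>2 \<le> (norm (phi *v x))\<^sup>2 \<and> (norm (phi *v x))\<^sup>2 \<le> (1+d)*(norm x)\<^sup>2"
begin

lemma ip_bound:
  assumes disj: "supp u \<inter> supp v = {}" and su: "l0 u \<le> s" and sv: "l0 v \<le> s"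
  shows "\<bar>inner (phi *v u) (phi *v v)\<bar> \<le> d * norm u * norm v"
proof (cases "u = 0 \<or> v = 0")
  case True then show ?thesis by auto
next
  case False
  define a where "a = norm v"
  define b where "b = norm u"
  have apos: "a > 0" "b > 0" using False by (auto simp: a_def b_def)
  have uv0: "inner u v = 0" by (rule inner_disjoint[OF disj])
  have sp: "l0 (a *\<^sub>R u + c *\<^sub>R v) \<le> 2 * s" for c
  proof -
    have "l0 (a *\<^sub>R u + c *\<^sub>R v) \<le> card (supp u \<union> supp v)"
      unfolding l0_def by (rule card_mono[OF finite supp_lin])
    also have "\<dots> \<le> l0 u + l0 v" unfolding l0_def by (rule card_Un_le)
    finally show ?thesis using su sv by simp
  qed
  have nrm: "(norm (a *\<^sub>R u + c *\<^sub>R v))\<^sup>2 = a\<^sup>2 * b\<^sup>2 + c\<^sup>2 * a\<^sup>2" for c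
  proof -
    have "(norm (a *\<^sub>R u + c *\<^sub>R v))\<^sup>2 = inner (a *\<^sub>R u + c *\<^sub>R v) (a *\<^sub>R u + c *\<^sub>R v)"
      by (rule power2_norm_eq_inner)
    also have "\<dots> = a\<^sup>2 * inner u u + 2*a*c*inner u v + c\<^sup>2 * inner v v"
      by (simp add: inner_add_left inner_add_right inner_commute power2_eq_square algebra_simps)
    also have "\<dots> = a\<^sup>2 * b\<^sup>2 + c\<^sup>2 * a\<^sup>2"
      using uv0 by (simp add: a_def b_def flip: power2_norm_eq_inner)
    finally show ?thesis .
  qed
  define X where "X = inner (phi *v u) (phi *v v)"
  have lin: "phi *v (a *\<^sub>R u + c *\<^sub>R v) = a *\<^sub>R (phi *v u) + c *\<^sub>R (phi *v v)" for c
    by (simp add: matrix_vector_right_distrib matrix_vector_mult_scaleR)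
  have pn: "(norm (phi *v (a *\<^sub>R u + c *\<^sub>R v)))\<^sup>2 = a\<^sup>2 * (norm (phi *v u))\<^sup>2 + 2*a*c*X + c\<^sup>2 * (norm (phi *v v))\<^sup>2" for c
    unfolding lin power2_norm_eq_inner X_def
    by (simp add: inner_add_left inner_add_right inner_commute power2_eq_square algebra_simps)
  have r1: "(1-d)*(a\<^sup>2 * b\<^sup>2 + c\<^sup>2 * a\<^sup>2) \<le> a\<^sup>2 * (norm (phi *v u))\<^sup>2 + 2*a*c*X + c\<^sup>2 * (norm (phi *v v))\<^sup>2"
    and r2: "a\<^sup>2 * (norm (phi *v u))\<^sup>2 + 2*a*c*X + c\<^sup>2 * (norm (phi *v v))\<^sup>2 \<le> (1+d)*(a\<^sup>2 * b\<^sup>2 + c\<^sup>2 * a\<^sup>2)" for c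
    using rip sp[of c] nrm[of c] pn[of c] by auto
  have h1: "4*(a*b)*X \<le> 4*(a*b)*(d*a*b)"
    using r2[of b] r1[of "-b"] by (simp add: algebra_simps power2_eq_square)
  have h2: "4*(a*b)*(-X) \<le> 4*(a*b)*(d*a*b)"
    using r2[of "-b"] r1[of b] by (simp add: algebra_simps power2_eq_square)
  have ab: "4*(a*b) > 0" using apos by simp
  have "X \<le> d*a*b" using h1 ab by (simp add: mult_le_cancel_left_pos)
  moreover have "-X \<le> d*a*b" using h2 ab mult_le_cancel_left_pos by blast
  ultimately show ?thesis unfolding X_def a_def b_def by (simp add: abs_le_iff mult.commute mult.left_commute)
qed

lemma ip_restr:
  assumes "l0 u \<le> s" "supp u \<inter> R = {}" "card R \<le> s"
  shows "\<bar>inner (phi *v u) (phi *v restr R h)\<bar> \<le> d * norm u * norm (restr R h)"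
  apply (rule ip_bound)
  using assms supp_restr[of R h] l0_restr[of R h] by auto

lemma tail_bound:
  assumes "\<forall>i\<in>R. \<bar>h$i\<bar> \<le> c" "0 \<le> c" "l0 u \<le> s" "supp u \<inter> R = {}"
  shows "\<bar>inner (phi *v u) (phi *v restr R h)\<bar> \<le> d * norm u * (sqrt s * c + (\<Sum>i\<in>R. \<bar>h$i\<bar>) / sqrt s)"
  using assms
proof (induction "card R" arbitrary: R c rule: less_induct)
  case less
  have D0: "0 \<le> d * norm u" using d0 by simp
  have ss: "sqrt (real s) > 0" using s0 by simp
  have nn: "0 \<le> (\<Sum>i\<in>R. \<bar>h$i\<bar>) / sqrt s" by (simp add: sum_nonneg)
  show ?case
  proof (cases "card R \<le> s")
    case True
    have "norm (restr R h) \<le> sqrt (card R) * c" using less.prems(1) by (intro norm_restr_le) auto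
    also have "\<dots> \<le> sqrt s * c" using True less.prems(2) by (intro mult_right_mono) auto
    finally have "norm (restr R h) \<le> sqrt s * c + (\<Sum>i\<in>R. \<bar>h$i\<bar>) / sqrt s" using nn by linarith
    then have "d * norm u * norm (restr R h) \<le> d * norm u * (sqrt s * c + (\<Sum>i\<in>R. \<bar>h$i\<bar>) / sqrt s)"
      using D0 by (intro mult_left_mono)
    then show ?thesis using ip_restr[OF less.prems(3,4) True, of h] by linarith
  next
    case False
    obtain B where B: "B \<subseteq> R" "card B = s" "\<forall>i\<in>B. \<forall>j\<in>R - B. \<bar>h$j\<bar> \<le> \<bar>h$i\<bar>"
      using select_top[of R s "\<lambda>i. \<bar>h$i\<bar>"] False by auto
    have fB: "finite B" by simp
    have Bne: "B \<noteq> {}" using B(2) s0 by auto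
    define c' where "c' = Min ((\<lambda>i. \<bar>h$i\<bar>) ` B)"
    obtain i0 where i0: "i0 \<in> B" "c' = \<bar>h$i0\<bar>"
    proof -
      have "c' \<in> (\<lambda>i. \<bar>h$i\<bar>) ` B" unfolding c'_def using Bne by (intro Min_in) auto
      then show ?thesis using that by blast
    qed
    have c'le: "c' \<le> \<bar>h$i\<bar>" if "i \<in> B" for i
      unfolding c'_def using that by (intro Min_le) auto
    have c'0: "0 \<le> c'" using i0 by simp
    have tailc: "\<forall>j\<in>R - B. \<bar>h$j\<bar> \<le> c'" using B(3) i0 by auto
    have "real (card B) * c' \<le> (\<Sum>i\<in>B. \<bar>h$i\<bar>)"
      using sum_bounded_below[of B c' "\<lambda>i. \<bar>h$i\<bar>"] c'le by auto
    then have sc': "real s * c' \<le> (\<Sum>i\<in>B. \<bar>h$i\<bar>)" using B(2) by simp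
    have sqc: "sqrt s * c' \<le> (\<Sum>i\<in>B. \<bar>h$i\<bar>) / sqrt s"
    proof -
      have "sqrt s * c' = real s * c' / sqrt s" using ss
        by (simp add: field_simps)
      also have "\<dots> \<le> (\<Sum>i\<in>B. \<bar>h$i\<bar>) / sqrt s" using sc' ss by (intro divide_right_mono) auto
      finally show ?thesis .
    qed
    have lt: "card (R - B) < card R"
    proof -
      have "card (R - B) = card R - card B" using B(1) by (simp add: card_Diff_subset)
      moreover have "card B > 0" using Bne by (simp add: card_gt_0_iff)
      moreover have "card B \<le> card R" using B(1) by (simp add: card_mono)
      ultimately show ?thesis by linarith
    qed
    have IH: "\<bar>inner (phi *v u) (phi *v restr (R - B) h)\<bar> \<le> d * norm u * (sqrt s * c' + (\<Sum>i\<in>R - B. \<bar>h$i\<bar>) / sqrt s)"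
      using less.hyps[OF lt tailc c'0 less.prems(3)] less.prems(4) by blast
    have first: "\<bar>inner (phi *v u) (phi *v restr B h)\<bar> \<le> d * norm u * (sqrt s * c)"
    proof -
      have "norm (restr B h) \<le> sqrt (card B) * c" using less.prems(1) B(1) by (intro norm_restr_le) auto
      then have "d * norm u * norm (restr B h) \<le> d * norm u * (sqrt s * c)"
        using D0 B(2) by (intro mult_left_mono) auto
      then show ?thesis using ip_restr[OF less.prems(3), of B h] less.prems(4) B by fastforce
    qed
    have split: "restr R h = restr B h + restr (R - B) h"
      using restr_add[of B "R - B" h] B(1) by (simp add: Un_absorb1)
    have "inner (phi *v u) (phi *v restr R h) = inner (phi *v u) (phi *v restr B h) + inner (phi *v u) (phi *v restr (R - B) h)"
      unfolding split by (simp add: matrix_vector_right_distrib inner_add_right)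
    then have "\<bar>inner (phi *v u) (phi *v restr R h)\<bar> \<le> d * norm u * (sqrt s * c) + d * norm u * (sqrt s * c' + (\<Sum>i\<in>R - B. \<bar>h$i\<bar>) / sqrt s)"
      using first IH by linarith
    also have "\<dots> \<le> d * norm u * (sqrt s * c) + d * norm u * ((\<Sum>i\<in>B. \<bar>h$i\<bar>) / sqrt s + (\<Sum>i\<in>R - B. \<bar>h$i\<bar>) / sqrt s)"
      using sqc D0 by (intro add_left_mono mult_left_mono) auto
    also have "\<dots> = d * norm u * (sqrt s * c + (\<Sum>i\<in>R. \<bar>h$i\<bar>) / sqrt s)"
      using sum.subset_diff[of B R "\<lambda>i. \<bar>h$i\<bar>"] B(1) by (simp add: algebra_simps add_divide_distrib)
    finally show ?thesis .
  qed
qed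

lemma sum_split_compl: fixes f :: "'n \<Rightarrow> real" shows "(\<Sum>i\<in>UNIV. f i) = (\<Sum>i\<in>T. f i) + (\<Sum>i\<in>-T. f i)"
  using sum.subset_diff[of T UNIV f] by (simp add: Compl_eq_Diff_UNIV add.commute)

lemma nsp:
  assumes dlt: "d < sqrt 2 - 1" and ker: "phi *v h = 0" and T0: "card T0 \<le> s"
    and l1: "(\<Sum>i\<in>-T0. \<bar>h$i\<bar>) \<le> (\<Sum>i\<in>T0. \<bar>h$i\<bar>)"
  shows "h = 0"
proof -
  define U where "U = - T0"
  obtain T1 where T1: "T1 \<subseteq> U" "card T1 = min s (card U)" "\<forall>i\<in>T1. \<forall>j\<in>U - T1. \<bar>h$j\<bar> \<le> \<bar>h$i\<bar>"
    using select_top[of U "min s (card U)" "\<lambda>i. \<bar>h$i\<bar>"] by auto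
  define R where "R = U - T1"
  have ss: "sqrt (real s) > 0" using s0 by simp
  define c where "c = (\<Sum>i\<in>T1. \<bar>h$i\<bar>) / s"
  have c0: "0 \<le> c" unfolding c_def by (simp add: sum_nonneg)
  have cR: "\<forall>j\<in>R. \<bar>h$j\<bar> \<le> c"
  proof
    fix j assume j: "j \<in> R"
    have "card T1 = s"
    proof (rule ccontr)
      assume "card T1 \<noteq> s"
      then have "card T1 = card U" using T1(2) by linarith
      then have "T1 = U" using T1(1) by (simp add: card_subset_eq)
      then show False using j unfolding R_def by auto
    qed
    have "real (card T1) * \<bar>h$j\<bar> \<le> (\<Sum>i\<in>T1. \<bar>h$i\<bar>)"
      using sum_bounded_below[of T1 "\<bar>h$j\<bar>" "\<lambda>i. \<bar>h$i\<bar>"] T1(3) j unfolding R_def by auto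
    then show "\<bar>h$j\<bar> \<le> c" unfolding c_def using \<open>card T1 = s\<close> s0 by (simp add: field_simps)
  qed
  have sqc: "sqrt s * c = (\<Sum>i\<in>T1. \<bar>h$i\<bar>) / sqrt s"
    unfolding c_def using ss by (simp add: field_simps)
  define u0 where "u0 = restr T0 h"
  define u1 where "u1 = restr T1 h"
  define r where "r = restr R h"
  define a where "a = norm u0"
  define b where "b = norm u1"
  have a0: "a \<ge> 0" "b \<ge> 0" by (auto simp: a_def b_def)
  have l0u0: "l0 u0 \<le> s" unfolding u0_def using l0_restr[of T0 h] T0 by linarith
  have l0u1: "l0 u1 \<le> s" unfolding u1_def using l0_restr[of T1 h] T1(2) by linarith
  have sU: "(\<Sum>i\<in>U. \<bar>h$i\<bar>) = (\<Sum>i\<in>T1. \<bar>h$i\<bar>) + (\<Sum>i\<in>R. \<bar>h$i\<bar>)"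
    unfolding R_def using sum.subset_diff[of T1 U "\<lambda>i. \<bar>h$i\<bar>"] T1(1) by simp
  have sT0: "(\<Sum>i\<in>T0. \<bar>h$i\<bar>) \<le> sqrt s * a"
  proof -
    have "(\<Sum>i\<in>T0. \<bar>h$i\<bar>) \<le> sqrt (card T0) * a" unfolding a_def u0_def by (rule l1_le_sqrt_card)
    also have "\<dots> \<le> sqrt s * a" using T0 a0 by (intro mult_right_mono) auto
    finally show ?thesis .
  qed
  have key: "(\<Sum>i\<in>U. \<bar>h$i\<bar>) / sqrt s \<le> a"
  proof -
    have "(\<Sum>i\<in>U. \<bar>h$i\<bar>) \<le> sqrt s * a" using l1 sT0 unfolding U_def by linarith
    then show ?thesis using ss by (simp add: field_simps)
  qed
  have tb: "\<bar>inner (phi *v u) (phi *v r)\<bar> \<le> d * norm u * a" if "l0 u \<le> s" "supp u \<inter> R = {}" for u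
  proof -
    have "\<bar>inner (phi *v u) (phi *v r)\<bar> \<le> d * norm u * (sqrt s * c + (\<Sum>i\<in>R. \<bar>h$i\<bar>) / sqrt s)"
      unfolding r_def by (rule tail_bound[OF cR c0 that])
    also have "sqrt s * c + (\<Sum>i\<in>R. \<bar>h$i\<bar>) / sqrt s = (\<Sum>i\<in>U. \<bar>h$i\<bar>) / sqrt s"
      unfolding sqc sU by (simp add: add_divide_distrib)
    also have "d * norm u * \<dots> \<le> d * norm u * a" using key d0 by (intro mult_left_mono) auto
    finally show ?thesis .
  qed
  have i0: "\<bar>inner (phi *v u0) (phi *v r)\<bar> \<le> d * a * a"
    using tb[OF l0u0] supp_restr[of T0 h] unfolding u0_def R_def U_def a_def by auto
  have i1: "\<bar>inner (phi *v u1) (phi *v r)\<bar> \<le> d * b * a"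
    using tb[OF l0u1] supp_restr[of T1 h] unfolding u1_def R_def b_def by auto
  define w where "w = u0 + u1"
  have T01: "T0 \<inter> T1 = {}" using T1(1) unfolding U_def by auto
  have hw: "h = w + r"
  proof -
    have "w = restr (T0 \<union> T1) h" unfolding w_def u0_def u1_def by (rule restr_add[OF T01])
    moreover have "restr (T0 \<union> T1) h + restr R h = restr UNIV h"
      using T1(1) unfolding R_def U_def by (subst restr_add) (auto intro: arg_cong[where f="\<lambda>X. restr X h"])
    ultimately show ?thesis unfolding r_def restr_UNIV by simp
  qed
  have pw: "phi *v w = - (phi *v r)"
    using ker unfolding hw by (simp add: matrix_vector_right_distrib eq_neg_iff_add_eq_0)
  have "(norm (phi *v w))\<^sup>2 = inner (phi *v w) (phi *v w)" by (rule power2_norm_eq_inner)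
  also have "\<dots> = - inner (phi *v u0) (phi *v r) - inner (phi *v u1) (phi *v r)"
    by (subst (2) pw) (simp add: w_def matrix_vector_right_distrib inner_add_left)
  also have "\<dots> \<le> d * a * a + d * b * a" using i0 i1 by linarith
  finally have up: "(norm (phi *v w))\<^sup>2 \<le> d * (a\<^sup>2 + a * b)" by (simp add: algebra_simps power2_eq_square)
  have uv0: "inner u0 u1 = 0"
    apply (rule inner_disjoint) using supp_restr[of T0 h] supp_restr[of T1 h] T01 unfolding u0_def u1_def by blast
  have nw: "(norm w)\<^sup>2 = a\<^sup>2 + b\<^sup>2"
    unfolding power2_norm_eq_inner a_def b_def w_def using uv0
    by (simp add: inner_add_left inner_add_right inner_commute)
  have l0w: "l0 w \<le> 2 * s"
  proof -
    have "supp w \<subseteq> supp u0 \<union> supp u1" unfolding w_def by (auto simp: supp_def)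
    then have "l0 w \<le> card (supp u0 \<union> supp u1)" unfolding l0_def by (intro card_mono) auto
    also have "\<dots> \<le> l0 u0 + l0 u1" unfolding l0_def by (rule card_Un_le)
    finally show ?thesis using l0u0 l0u1 by linarith
  qed
  have low: "(1 - d) * (a\<^sup>2 + b\<^sup>2) \<le> (norm (phi *v w))\<^sup>2" using rip l0w nw by metis
  have ab: "a * b \<le> a\<^sup>2 / 4 + b\<^sup>2"
  proof -
    have "0 \<le> (a/2 - b)\<^sup>2" by simp
    then show ?thesis by (simp add: power2_eq_square algebra_simps)
  qed
  have s54: "5/4 \<le> sqrt (2::real)" by (rule real_le_rsqrt) (simp add: power2_eq_square)
  have "a\<^sup>2 + a * b \<le> sqrt 2 * (a\<^sup>2 + b\<^sup>2)"
  proof -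
    have "a\<^sup>2 + a * b \<le> 5/4 * a\<^sup>2 + b\<^sup>2" using ab by simp
    also have "\<dots> \<le> sqrt 2 * a\<^sup>2 + sqrt 2 * b\<^sup>2"
    proof (rule add_mono)
      show "5/4 * a\<^sup>2 \<le> sqrt 2 * a\<^sup>2" using s54 by (intro mult_right_mono) auto
      have "1 \<le> sqrt (2::real)" by simp
      then show "b\<^sup>2 \<le> sqrt 2 * b\<^sup>2" using mult_right_mono[of 1 "sqrt 2" "b\<^sup>2"] by simp
    qed
    finally show ?thesis by (simp add: algebra_simps)
  qed
  then have "d * (a\<^sup>2 + a * b) \<le> d * (sqrt 2 * (a\<^sup>2 + b\<^sup>2))" using d0 by (rule mult_left_mono)
  then have "(1 - d) * (a\<^sup>2 + b\<^sup>2) \<le> d * sqrt 2 * (a\<^sup>2 + b\<^sup>2)" using low up by simp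
  then have Qle: "(1 - d - d * sqrt 2) * (a\<^sup>2 + b\<^sup>2) \<le> 0" by (simp add: algebra_simps)
  have "d * (1 + sqrt 2) < (sqrt 2 - 1) * (1 + sqrt 2)"
    using dlt by (intro mult_strict_right_mono) (auto intro: add_pos_nonneg)
  also have "\<dots> = 1" by (simp add: algebra_simps)
  finally have pos: "1 - d - d * sqrt 2 > 0" by (simp add: algebra_simps)
  have "a\<^sup>2 + b\<^sup>2 \<le> 0" using Qle pos by (simp add: mult_le_0_iff)
  then have "a = 0" using a0
    by (smt (verit) zero_le_power2 power_eq_0_iff zero_neq_numeral)
  then have z0: "(\<Sum>i\<in>T0. \<bar>h$i\<bar>) \<le> 0" using sT0 by simp
  then have zU: "(\<Sum>i\<in>-T0. \<bar>h$i\<bar>) \<le> 0" using l1 by linarith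
  have A: "\<forall>i\<in>T0. h$i = 0" using z0 sum_nonneg_eq_0_iff[of T0 "\<lambda>i. \<bar>h$i\<bar>"]
    by (simp add: sum_nonneg antisym)
  have B: "\<forall>i\<in>-T0. h$i = 0" using zU sum_nonneg_eq_0_iff[of "-T0" "\<lambda>i. \<bar>h$i\<bar>"]
    by (simp add: sum_nonneg antisym)
  show "h = 0" using A B by (auto simp: vec_eq_iff)
qed

lemma recover:
  assumes dlt: "d < sqrt 2 - 1" and sx: "l0 x \<le> s"
  shows "l1_min_solution phi (phi *v x) x \<and> (\<forall>z. l1_min_solution phi (phi *v x) z \<longrightarrow> z = x)"
proof -
  define T0 where "T0 = supp x"
  have cT0: "card T0 \<le> s" using sx unfolding T0_def l0_def .
  have xo: "x$i = 0" if "i \<in> -T0" for i using that unfolding T0_def supp_def by auto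
  have strict: "l1_norm x < l1_norm w" if w: "phi *v w = phi *v x" "w \<noteq> x" for w
  proof -
    define h where "h = w - x"
    have ker: "phi *v h = 0" unfolding h_def using w(1) by (simp add: matrix_vector_mult_diff_distrib)
    have hne: "h \<noteq> 0" unfolding h_def using w(2) by simp
    have gt: "(\<Sum>i\<in>T0. \<bar>h$i\<bar>) < (\<Sum>i\<in>-T0. \<bar>h$i\<bar>)"
      using nsp[OF dlt ker cT0] hne by fastforce
    have "l1_norm x = (\<Sum>i\<in>T0. \<bar>x$i\<bar>)"
      unfolding l1_norm_def sum_split_compl[of _ T0] using xo by simp
    also have "\<dots> < (\<Sum>i\<in>T0. \<bar>x$i\<bar> - \<bar>h$i\<bar>) + (\<Sum>i\<in>-T0. \<bar>h$i\<bar>)"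
      using gt by (simp add: sum_subtractf)
    also have "\<dots> \<le> (\<Sum>i\<in>T0. \<bar>w$i\<bar>) + (\<Sum>i\<in>-T0. \<bar>w$i\<bar>)"
    proof (rule add_mono)
      show "(\<Sum>i\<in>T0. \<bar>x$i\<bar> - \<bar>h$i\<bar>) \<le> (\<Sum>i\<in>T0. \<bar>w$i\<bar>)"
        by (rule sum_mono) (simp add: h_def abs_triangle_ineq2_sym)
      show "(\<Sum>i\<in>-T0. \<bar>h$i\<bar>) \<le> (\<Sum>i\<in>-T0. \<bar>w$i\<bar>)"
        by (rule sum_mono) (simp add: h_def xo)
    qed
    also have "\<dots> = l1_norm w" unfolding l1_norm_def sum_split_compl[of _ T0] by simp
    finally show ?thesis .
  qed
  have "l1_min_solution phi (phi *v x) x"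
    unfolding l1_min_solution_def using strict by fastforce
  moreover have "z = x" if "l1_min_solution phi (phi *v x) z" for z
    using that strict[of z] unfolding l1_min_solution_def by fastforce
  ultimately show ?thesis by blast
qed

end


lemma rip_from_RIC:
  fixes phi :: "real^'n::finite^'p::finite"
  assumes "RIC phi m < sqrt 2 - 1"
  shows "\<exists>d. 0 \<le> d \<and> d < sqrt 2 - 1 \<and> (\<forall>x. l0 x \<le> m \<longrightarrow> (1-d)*(norm x)\<^sup>2 \<le> (norm (phi *v x))\<^sup>2 \<and> (norm (phi *v x))\<^sup>2 \<le> (1+d)*(norm x)\<^sup>2)"
proof -
  define S where "S = {d. \<forall>x. sparse m x \<longrightarrow>
      (1 - d) * (norm x)\<^sup>2 \<le> (norm (phi *v x))\<^sup>2 \<and> (norm (phi *v x))\<^sup>2 \<le> (1 + d) * (norm x)\<^sup>2}"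
  obtain K where K: "K > 0" "\<And>x. norm (phi *v x) \<le> norm x * K"
    using bounded_linear.pos_bounded[OF matrix_vector_mul_bounded_linear[of phi]] by blast
  have "max 1 (K\<^sup>2) \<in> S"
  proof -
    have "(1 - max 1 (K\<^sup>2)) * (norm x)\<^sup>2 \<le> (norm (phi *v x))\<^sup>2 \<and> (norm (phi *v x))\<^sup>2 \<le> (1 + max 1 (K\<^sup>2)) * (norm x)\<^sup>2" for x :: "real^'n"
    proof
      have "(1 - max 1 (K\<^sup>2)) * (norm x)\<^sup>2 \<le> 0" by (intro mult_nonpos_nonneg) auto
      then show "(1 - max 1 (K\<^sup>2)) * (norm x)\<^sup>2 \<le> (norm (phi *v x))\<^sup>2" by (meson order_trans zero_le_power2)
      have "(norm (phi *v x))\<^sup>2 \<le> (norm x * K)\<^sup>2" using K(2)[of x] by (intro power_mono) auto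
      also have "\<dots> = K\<^sup>2 * (norm x)\<^sup>2" by (simp add: power_mult_distrib)
      also have "\<dots> \<le> (1 + max 1 (K\<^sup>2)) * (norm x)\<^sup>2" by (intro mult_right_mono) auto
      finally show "(norm (phi *v x))\<^sup>2 \<le> (1 + max 1 (K\<^sup>2)) * (norm x)\<^sup>2" .
    qed
    then show ?thesis unfolding S_def by blast
  qed
  then have "S \<noteq> {}" by blast
  then obtain d1 where d1: "d1 \<in> S" "d1 < sqrt 2 - 1"
    using cInf_lessD[of S "sqrt 2 - 1"] assms unfolding RIC_def S_def by blast
  show ?thesis
  proof (intro exI conjI allI impI)
    show "0 \<le> max d1 0" by simp
    show "max d1 0 < sqrt 2 - 1" using d1(2) by simp
    fix x :: "real^'n" assume "l0 x \<le> m"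
    then have "(1 - d1) * (norm x)\<^sup>2 \<le> (norm (phi *v x))\<^sup>2 \<and> (norm (phi *v x))\<^sup>2 \<le> (1 + d1) * (norm x)\<^sup>2"
      using d1(1) unfolding S_def sparse_def by blast
    moreover have "(1 - max d1 0) * (norm x)\<^sup>2 \<le> (1 - d1) * (norm x)\<^sup>2" by (intro mult_right_mono) auto
    moreover have "(1 + d1) * (norm x)\<^sup>2 \<le> (1 + max d1 0) * (norm x)\<^sup>2" by (intro mult_right_mono) auto
    ultimately show "(1 - max d1 0) * (norm x)\<^sup>2 \<le> (norm (phi *v x))\<^sup>2"
      "(norm (phi *v x))\<^sup>2 \<le> (1 + max d1 0) * (norm x)\<^sup>2" by linarith+
  qed
qed

lemma traj_comp:
  fixes A :: "'n::finite \<Rightarrow> 'n \<Rightarrow> bool"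
  assumes assm1: "\<And>i. f i 0 = 0" and assm2a: "\<And>i j. h i j 0 0 = 0"
    and "i \<noteq> q"
  shows "trajectory A f h (pinching e q) 1 $ i = (if A i q then h i q 0 e else 0)"
proof -
  have "trajectory A f h (pinching e q) 1 $ i = (\<Sum>j\<in>{j. A i j}. h i j 0 (pinching e q $ j))"
    using assms(3) by (simp add: trajectory_def net_step_def pinching_def assm1)
  also have "\<dots> = (\<Sum>j\<in>{j. A i j}. if j = q then h i q 0 e else 0)"
    by (intro sum.cong) (auto simp: pinching_def assm2a)
  also have "\<dots> = (if A i q then h i q 0 e else 0)" by (simp add: sum.delta)
  finally show ?thesis .
qed

theorem mainTheorem4:
  fixes A :: "'n::finite \<Rightarrow> 'n \<Rightarrow> bool"
    and f :: "'n \<Rightarrow> real \<Rightarrow> real"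
    and h :: "'n \<Rightarrow> 'n \<Rightarrow> real \<Rightarrow> real \<Rightarrow> real"
    and \<delta> :: real
    and eps :: "'n \<Rightarrow> real"
    and phi :: "'n \<Rightarrow> real^'n^'p::finite"
  assumes no_loops: "\<And>i. \<not> A i i"
    and assm1: "\<And>i. f i 0 = 0"
    and delta_pos: "\<delta> > 0"
    and assm2a: "\<And>i j. h i j 0 0 = 0"
    and assm2b: "\<And>i j v. 0 < \<bar>v\<bar> \<Longrightarrow> \<bar>v\<bar> < \<delta> \<Longrightarrow> h i j 0 v \<noteq> 0"
    and eps: "\<And>q. 0 < \<bar>eps q\<bar> \<and> \<bar>eps q\<bar> < \<delta>"
    and P_lt_N: "CARD('p) < CARD('n)"
    and rip: "\<And>q. RIC (phi q) (2 * (max_out_degree A + 1)) < sqrt 2 - 1"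
  shows "(\<forall>q. (\<exists>!z. l1_min_solution (phi q) (phi q *v trajectory A f h (pinching (eps q) q) 1) z)
              \<and> l1_min_solution (phi q) (phi q *v trajectory A f h (pinching (eps q) q) 1)
                  (trajectory A f h (pinching (eps q) q) 1))
       \<and> (\<forall>q. supp (trajectory A f h (pinching (eps q) q) 1) - {q} = first_level A q)
       \<and> (\<forall>i j. A i j \<longleftrightarrow> i \<noteq> j \<and>
              i \<in> supp (THE z. l1_min_solution (phi j) (phi j *v trajectory A f h (pinching (eps j) j) 1) z))"
proof -
  define s where "s = max_out_degree A + 1"
  define X where "X q = trajectory A f h (pinching (eps q) q) 1" for q
  have s0: "0 < s" unfolding s_def by simp
  have supp_eq: "supp (X q) - {q} = first_level A q" for q
  proof -
    have "i \<in> supp (X q) \<longleftrightarrow> A i q" if "i \<noteq> q" for i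
      using traj_comp[of f h i q A "eps q", OF assm1 assm2a that] assm2b eps[of q]
      unfolding X_def supp_def by auto
    then show ?thesis unfolding first_level_def using no_loops[of q]
      by (intro set_eqI) (case_tac "x = q", auto)
  qed
  have sparseX: "l0 (X q) \<le> s" for q
  proof -
    have "supp (X q) \<subseteq> insert q (first_level A q)" using supp_eq[of q] by auto
    then have "l0 (X q) \<le> card (insert q (first_level A q))" unfolding l0_def by (intro card_mono) auto
    also have "\<dots> \<le> out_degree A q + 1" unfolding out_degree_def first_level_def
      by (metis card_insert_le_m1 finite Suc_eq_plus1 le_refl zero_less_Suc card_insert_if
          le_SucI)
    also have "out_degree A q \<le> max_out_degree A" unfolding max_out_degree_def by (intro Max_ge) auto
    finally show ?thesis unfolding s_def by linarith
  qed
  have rec: "l1_min_solution (phi q) (phi q *v X q) (X q) \<and> (\<forall>z. l1_min_solution (phi q) (phi q *v X q) z \<longrightarrow> z = X q)" for q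
  proof -
    obtain d where d: "0 \<le> d" "d < sqrt 2 - 1"
      "\<forall>x. l0 x \<le> 2 * s \<longrightarrow> (1-d)*(norm x)\<^sup>2 \<le> (norm (phi q *v x))\<^sup>2 \<and> (norm (phi q *v x))\<^sup>2 \<le> (1+d)*(norm x)\<^sup>2"
      using rip_from_RIC[OF rip[of q]] unfolding s_def by blast
    show ?thesis by (rule recover[OF d(1) s0 d(3) d(2) sparseX])
  qed
  have the_eq: "(THE z. l1_min_solution (phi q) (phi q *v X q) z) = X q" for q
    using rec[of q] by (intro the_equality) auto
  show ?thesis
    unfolding X_def[symmetric]
  proof (intro conjI allI)
    fix q
    show "\<exists>!z. l1_min_solution (phi q) (phi q *v X q) z" using rec[of q] by blast
    show "l1_min_solution (phi q) (phi q *v X q) (X q)" using rec[of q] by blast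
    show "supp (X q) - {q} = first_level A q" by (rule supp_eq)
  next
    fix i j
    show "A i j \<longleftrightarrow> i \<noteq> j \<and> i \<in> supp (THE z. l1_min_solution (phi j) (phi j *v X j) z)"
      unfolding the_eq using supp_eq[of j] no_loops[of i] unfolding first_level_def by blast
  qed
qed

end
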